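(* There exist universal constants $c_2>0$ and $\eta_0>0$ such that, for the symmetric Gaussian mixture with $\|\theta^*\|_2/\sigma\ge\eta\ge\eta_0$, there is a constant $\gamma\in(0,1)$ with $\gamma\le\exp(-c_2\eta^2)$ such that for all $\theta$ with $\|\theta-\theta^*\|_2\le\|\theta^*\|_2/4$, $$\big\|\mathbb{E}\big[2(w_\theta(Y)-w_{\theta^*}(Y))Y\big]\big\|_2\le\gamma\|\theta-\theta^*\|_2.$$
   Context: Gaussian mixture model: $Y=S\theta^*+V$, $S$ a uniform random sign independent of $V\sim N(0,\sigma^2I_d)$. Weight $w_\theta(y)=\dfrac{\exp(-\|\theta-y\|_2^2/(2\sigma^2))}{\exp(-\|\theta-y\|_2^2/(2\sigma^2))+\exp(-\|\theta+y\|_2^2/(2\sigma^2))}$. *)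

theory Defs
  imports "HOL-Probability.Probability"
begin

text \<open>Vectors in R^d are represented as functions nat => real, of which only the
  coordinates i < d are relevant. This allows the constants to be uniform in d.\<close>

definition vnorm :: "nat \<Rightarrow> (nat \<Rightarrow> real) \<Rightarrow> real" where
  "vnorm d x = sqrt (\<Sum>i<d. (x i)\<^sup>2)"

definition gauss :: "nat \<Rightarrow> real \<Rightarrow> (nat \<Rightarrow> real) measure" where
  "gauss d \<sigma> = PiM {..<d} (\<lambda>_. density lborel (normal_density 0 \<sigma>))"

text \<open>Expectation of f(Y) where Y = S theta* + V, S uniform on {-1,1}, independent of V.\<close>
definition gmm_expect :: "nat \<Rightarrow> real \<Rightarrow> (nat \<Rightarrow> real) \<Rightarrow> ((nat \<Rightarrow> real) \<Rightarrow> real) \<Rightarrow> real" where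
  "gmm_expect d \<sigma> \<theta>s f =
     (1/2) * (\<integral>v. f (\<lambda>i. \<theta>s i + v i) \<partial>gauss d \<sigma>)
   + (1/2) * (\<integral>v. f (\<lambda>i. - \<theta>s i + v i) \<partial>gauss d \<sigma>)"

definition wgt :: "nat \<Rightarrow> real \<Rightarrow> (nat \<Rightarrow> real) \<Rightarrow> (nat \<Rightarrow> real) \<Rightarrow> real" where
  "wgt d \<sigma> \<theta> y =
     exp (- (vnorm d (\<lambda>i. \<theta> i - y i))\<^sup>2 / (2 * \<sigma>\<^sup>2)) /
     (exp (- (vnorm d (\<lambda>i. \<theta> i - y i))\<^sup>2 / (2 * \<sigma>\<^sup>2))
      + exp (- (vnorm d (\<lambda>i. \<theta> i + y i))\<^sup>2 / (2 * \<sigma>\<^sup>2)))"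

end

theory Submission
  imports Defs
begin

definition qm :: "real \<Rightarrow> nat \<Rightarrow> real \<Rightarrow> real" where
  "qm \<sigma> n a = (if n = 0 then 1 else if n = 1 then a else a\<^sup>2 + \<sigma>\<^sup>2)"

lemma nd_tilt:
  assumes "\<sigma> > 0"
  shows "normal_density 0 \<sigma> x * exp (c * x) = exp (\<sigma>\<^sup>2 * c\<^sup>2 / 2) * normal_density (\<sigma>\<^sup>2 * c) \<sigma> x"
proof -
  have "- x\<^sup>2 / (2 * \<sigma>\<^sup>2) + c * x = \<sigma>\<^sup>2 * c\<^sup>2 / 2 + (- (x - \<sigma>\<^sup>2 * c)\<^sup>2 / (2 * \<sigma>\<^sup>2))"
    using assms by (simp add: field_simps power2_eq_square)
  then show ?thesis
    unfolding normal_density_def by (simp add: exp_add[symmetric] mult.commute mult.left_commute)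
qed

lemma gauss1_poly:
  assumes s: "\<sigma> > 0" and n: "n \<le> 2"
  shows "has_bochner_integral lborel (\<lambda>x. normal_density \<mu> \<sigma> x * (m + x)^n) (qm \<sigma> n (m + \<mu>))"
proof -
  have e0: "has_bochner_integral lborel (\<lambda>x. normal_density \<mu> \<sigma> x) 1"
    using integrable_normal_density[OF s, of \<mu>] integral_normal_density[OF s, of \<mu>] by (simp add: has_bochner_integral_iff)
  have e1: "has_bochner_integral lborel (\<lambda>x. normal_density \<mu> \<sigma> x * (x - \<mu>)) 0"
    using normal_moment_odd[OF s, of \<mu> 0] by simp
  have e2: "has_bochner_integral lborel (\<lambda>x. normal_density \<mu> \<sigma> x * (x - \<mu>)\<^sup>2) (\<sigma>\<^sup>2)"
    using normal_moment_even[OF s, of \<mu> 1] s by (simp add: fact_numeral)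
  consider "n = 0" | "n = 1" | "n = 2" using n by linarith
  then show ?thesis
  proof cases
    case 1 then show ?thesis using e0 by (simp add: qm_def)
  next
    case 2
    have "has_bochner_integral lborel (\<lambda>x. normal_density \<mu> \<sigma> x * (x - \<mu>) + (m + \<mu>) * normal_density \<mu> \<sigma> x) (0 + (m+\<mu>) * 1)"
      by (intro has_bochner_integral_add e1 has_bochner_integral_mult_right e0)
    then show ?thesis using 2 by (simp add: qm_def algebra_simps)
  next
    case 3
    have "has_bochner_integral lborel (\<lambda>x. normal_density \<mu> \<sigma> x * (x - \<mu>)\<^sup>2 + (2 * (m + \<mu>)) * (normal_density \<mu> \<sigma> x * (x - \<mu>)) + (m + \<mu>)\<^sup>2 * normal_density \<mu> \<sigma> x) (\<sigma>\<^sup>2 + (2*(m+\<mu>)) * 0 + (m+\<mu>)\<^sup>2 * 1)"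
      by (intro has_bochner_integral_add e1 e2 has_bochner_integral_mult_right e0)
    then show ?thesis using 3 by (simp add: qm_def algebra_simps power2_eq_square)
  qed
qed

lemma gauss1:
  assumes s: "\<sigma> > 0" and n: "n \<le> 2"
  shows "has_bochner_integral (density lborel (normal_density 0 \<sigma>)) (\<lambda>x. exp (c * x) * (m + x)^n)
           (exp (\<sigma>\<^sup>2 * c\<^sup>2 / 2) * qm \<sigma> n (m + \<sigma>\<^sup>2 * c))"
proof (rule has_bochner_integral_density)
  show "has_bochner_integral lborel (\<lambda>x. normal_density 0 \<sigma> x *\<^sub>R (exp (c * x) * (m + x) ^ n))
     (exp (\<sigma>\<^sup>2 * c\<^sup>2 / 2) * qm \<sigma> n (m + \<sigma>\<^sup>2 * c))"
  proof -
    have "(\<lambda>x. normal_density 0 \<sigma> x *\<^sub>R (exp (c * x) * (m + x) ^ n)) =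
          (\<lambda>x. exp (\<sigma>\<^sup>2 * c\<^sup>2 / 2) * (normal_density (\<sigma>\<^sup>2 * c) \<sigma> x * (m + x) ^ n))"
      using nd_tilt[OF s] by (simp add: fun_eq_iff mult.assoc[symmetric])
    then show ?thesis
      using has_bochner_integral_mult_right[OF gauss1_poly[OF s n, of "\<sigma>\<^sup>2 * c" m]] by simp
  qed
qed auto

lemma prod_pow_delta:
  fixes x :: "nat \<Rightarrow> real"
  assumes "i < d"
  shows "(\<Prod>k<d. x k ^ (if k = i then 1 else 0)) = x i"
proof -
  have "(\<Prod>k<d. x k ^ (if k = i then 1 else 0)) = (\<Prod>k<d. (if k = i then x k else 1))"
    by (intro prod.cong) auto
  also have "\<dots> = x i" using assms by (simp add: prod.delta)
  finally show ?thesis .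
qed

lemma sfm_nd: "\<sigma> > 0 \<Longrightarrow> product_sigma_finite (\<lambda>_. density lborel (normal_density 0 \<sigma>))"
  unfolding product_sigma_finite_def
  using prob_space_normal_density prob_space_imp_sigma_finite by blast

lemma gaussd_core:
  assumes s: "\<sigma> > 0" and ij: "i < d" "j < d"
  shows "has_bochner_integral (gauss d \<sigma>) (\<lambda>v. (m i + v i) * (m j + v j) * exp (\<Sum>k<d. c k * v k))
     (exp (\<sigma>\<^sup>2 * (\<Sum>k<d. (c k)\<^sup>2) / 2) * ((m i + \<sigma>\<^sup>2 * c i) * (m j + \<sigma>\<^sup>2 * c j) + (if i = j then \<sigma>\<^sup>2 else 0)))"
proof -
  interpret P: product_sigma_finite "\<lambda>_. density lborel (normal_density 0 \<sigma>)" using sfm_nd[OF s] .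
  define N where "N k = (if k = i then 1 else 0) + (if k = j then 1 else (0::nat))" for k
  define f where "f k t = exp (c k * t) * (m k + t) ^ N k" for k t
  have N2: "N k \<le> 2" for k unfolding N_def by auto
  have hb: "has_bochner_integral (density lborel (normal_density 0 \<sigma>)) (f k)
           (exp (\<sigma>\<^sup>2 * (c k)\<^sup>2 / 2) * qm \<sigma> (N k) (m k + \<sigma>\<^sup>2 * c k))" for k
    unfolding f_def using gauss1[OF s N2] .
  have int: "integrable (gauss d \<sigma>) (\<lambda>v. \<Prod>k<d. f k (v k))"
    unfolding gauss_def using hb by (intro P.product_integrable_prod) (auto simp: has_bochner_integral_iff)
  have val: "integral\<^sup>L (gauss d \<sigma>) (\<lambda>v. \<Prod>k<d. f k (v k)) =
     (\<Prod>k<d. exp (\<sigma>\<^sup>2 * (c k)\<^sup>2 / 2) * qm \<sigma> (N k) (m k + \<sigma>\<^sup>2 * c k))"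
    unfolding gauss_def using hb
    by (subst P.product_integral_prod) (auto simp: has_bochner_integral_iff)
  have pw: "(\<Prod>k<d. f k (v k)) = (m i + v i) * (m j + v j) * exp (\<Sum>k<d. c k * v k)" for v
  proof -
    have "(\<Prod>k<d. f k (v k)) = (\<Prod>k<d. exp (c k * v k)) *
        ((\<Prod>k<d. (m k + v k) ^ (if k = i then 1 else 0)) * (\<Prod>k<d. (m k + v k) ^ (if k = j then 1 else 0)))"
      unfolding f_def N_def by (simp add: power_add prod.distrib)
    also have "\<dots> = exp (\<Sum>k<d. c k * v k) * ((m i + v i) * (m j + v j))"
      using ij by (simp add: prod_pow_delta exp_sum)
    finally show ?thesis by simp
  qed
  have qv: "(\<Prod>k<d. qm \<sigma> (N k) (m k + \<sigma>\<^sup>2 * c k)) =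
      (m i + \<sigma>\<^sup>2 * c i) * (m j + \<sigma>\<^sup>2 * c j) + (if i = j then \<sigma>\<^sup>2 else 0)"
  proof (cases "i = j")
    case True
    have "(\<Prod>k<d. qm \<sigma> (N k) (m k + \<sigma>\<^sup>2 * c k)) = (\<Prod>k<d. if k = i then (m k + \<sigma>\<^sup>2 * c k)\<^sup>2 + \<sigma>\<^sup>2 else 1)"
      by (intro prod.cong) (auto simp: N_def qm_def True)
    also have "\<dots> = (m i + \<sigma>\<^sup>2 * c i)\<^sup>2 + \<sigma>\<^sup>2" using ij by (simp add: prod.delta)
    finally show ?thesis using True by (simp add: power2_eq_square)
  next
    case False
    have "(\<Prod>k<d. qm \<sigma> (N k) (m k + \<sigma>\<^sup>2 * c k)) =
      (\<Prod>k<d. (if k = i then (m k + \<sigma>\<^sup>2 * c k) else 1) * (if k = j then (m k + \<sigma>\<^sup>2 * c k) else 1))"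
      by (intro prod.cong) (auto simp: N_def qm_def False)
    also have "\<dots> = (m i + \<sigma>\<^sup>2 * c i) * (m j + \<sigma>\<^sup>2 * c j)" using ij by (simp add: prod.distrib prod.delta)
    finally show ?thesis using False by simp
  qed
  have "(\<Prod>k<d. exp (\<sigma>\<^sup>2 * (c k)\<^sup>2 / 2) * qm \<sigma> (N k) (m k + \<sigma>\<^sup>2 * c k)) =
     exp (\<sigma>\<^sup>2 * (\<Sum>k<d. (c k)\<^sup>2) / 2) * ((m i + \<sigma>\<^sup>2 * c i) * (m j + \<sigma>\<^sup>2 * c j) + (if i = j then \<sigma>\<^sup>2 else 0))"
    by (simp add: prod.distrib qv exp_sum[symmetric] sum_distrib_left sum_divide_distrib)
  then show ?thesis using int val pw by (simp add: has_bochner_integral_iff)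
qed

lemma gaussd_quad:
  assumes s: "\<sigma> > 0"
  shows "has_bochner_integral (gauss d \<sigma>) (\<lambda>v. (\<Sum>i<d. u i * (m i + v i))\<^sup>2 * exp (\<Sum>k<d. c k * v k))
     (exp (\<sigma>\<^sup>2 * (\<Sum>k<d. (c k)\<^sup>2) / 2) * ((\<Sum>i<d. u i * (m i + \<sigma>\<^sup>2 * c i))\<^sup>2 + \<sigma>\<^sup>2 * (\<Sum>i<d. (u i)\<^sup>2)))"
proof -
  define E where "E = exp (\<sigma>\<^sup>2 * (\<Sum>k<d. (c k)\<^sup>2) / 2)"
  define a where "a i = m i + \<sigma>\<^sup>2 * c i" for i
  have hb: "has_bochner_integral (gauss d \<sigma>)
     (\<lambda>v. \<Sum>i<d. \<Sum>j<d. (u i * u j) * ((m i + v i) * (m j + v j) * exp (\<Sum>k<d. c k * v k)))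
     (\<Sum>i<d. \<Sum>j<d. (u i * u j) * (E * (a i * a j + (if i = j then \<sigma>\<^sup>2 else 0))))"
    unfolding E_def a_def
    by (intro has_bochner_integral_sum has_bochner_integral_mult_right gaussd_core[OF s]) auto
  have pw: "(\<Sum>i<d. u i * (m i + v i))\<^sup>2 * exp (\<Sum>k<d. c k * v k) =
     (\<Sum>i<d. \<Sum>j<d. (u i * u j) * ((m i + v i) * (m j + v j) * exp (\<Sum>k<d. c k * v k)))" for v
  proof -
    have "(\<Sum>i<d. u i * (m i + v i))\<^sup>2 = (\<Sum>i<d. \<Sum>j<d. (u i * (m i + v i)) * (u j * (m j + v j)))"
      by (simp add: power2_eq_square sum_product)
    then show ?thesis by (simp add: sum_distrib_left sum_distrib_right mult_ac)
  qed
  have vv: "(\<Sum>i<d. \<Sum>j<d. (u i * u j) * (E * (a i * a j + (if i = j then \<sigma>\<^sup>2 else 0)))) =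
     E * ((\<Sum>i<d. u i * a i)\<^sup>2 + \<sigma>\<^sup>2 * (\<Sum>i<d. (u i)\<^sup>2))"
  proof -
    have "(\<Sum>i<d. \<Sum>j<d. (u i * u j) * (E * (a i * a j + (if i = j then \<sigma>\<^sup>2 else 0)))) =
      (\<Sum>i<d. \<Sum>j<d. E * ((u i * a i) * (u j * a j))) + (\<Sum>i<d. \<Sum>j<d. if i = j then E * \<sigma>\<^sup>2 * (u i * u j) else 0)"
    proof -
      have "(u i * u j) * (E * (a i * a j + (if i = j then \<sigma>\<^sup>2 else 0))) =
         E * ((u i * a i) * (u j * a j)) + (if i = j then E * \<sigma>\<^sup>2 * (u i * u j) else 0)" for i j
        by (simp add: algebra_simps)
      then show ?thesis by (simp add: sum.distrib)
    qed
    also have "(\<Sum>i<d. \<Sum>j<d. if i = j then E * \<sigma>\<^sup>2 * (u i * u j) else 0) = (\<Sum>i<d. E * \<sigma>\<^sup>2 * (u i)\<^sup>2)"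
      by (intro sum.cong refl) (simp add: sum.delta power2_eq_square)
    finally show ?thesis
      by (simp add: power2_eq_square sum_product sum_distrib_left sum_distrib_right algebra_simps)
  qed
  show ?thesis using hb unfolding pw[symmetric] vv by (simp add: E_def a_def)
qed

definition lg :: "real \<Rightarrow> real" where "lg t = 1 / (1 + exp (- t))"

lemma lg_deriv: "DERIV lg t :> exp (- t) / (1 + exp (- t))\<^sup>2"
proof -
  have nz: "1 + exp (- t) \<noteq> 0" by (smt (verit) exp_gt_zero)
  have "((\<lambda>t. 1 / (1 + exp (- t))) has_real_derivative
      (0 * (1 + exp (- t)) - 1 * (0 + exp (- t) * - 1)) / ((1 + exp (- t)) * (1 + exp (- t)))) (at t)"
    by (intro derivative_intros DERIV_divide) (auto simp: nz)
  then show ?thesis unfolding lg_def by (simp add: power2_eq_square)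
qed

lemma lg_deriv_bound: "exp (- t) / (1 + exp (- t))\<^sup>2 \<le> exp (- (t::real) / 4)"
proof -
  define u where "u = exp (- t)"
  have u0: "u > 0" unfolding u_def by simp
  have D1: "(1 + u)\<^sup>2 \<ge> 1" using u0 by (simp add: power2_eq_square algebra_simps add_nonneg_nonneg)
  have D2: "(1 + u)\<^sup>2 \<ge> u\<^sup>2" using u0 by (intro power_mono) auto
  show ?thesis
  proof (cases "t \<ge> 0")
    case True
    have "u / (1 + u)\<^sup>2 \<le> u / 1"
      using D1 u0 by (intro divide_left_mono) auto
    also have "\<dots> \<le> exp (- t / 4)" unfolding u_def using True by simp
    finally show ?thesis unfolding u_def .
  next
    case False
    have "u / (1 + u)\<^sup>2 \<le> u / u\<^sup>2"
      using D2 u0 by (intro divide_left_mono) auto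
    also have "\<dots> = 1 / u" using u0 by (simp add: power2_eq_square)
    also have "1 / u = exp t" unfolding u_def by (simp add: exp_minus inverse_eq_divide)
    also have "\<dots> \<le> 1" using False by simp
    also have "1 \<le> exp (- t / 4)" using False by simp
    finally show ?thesis unfolding u_def .
  qed
qed

lemma lg_lip_lt:
  assumes "a < b"
  shows "\<bar>lg a - lg b\<bar> \<le> \<bar>a - b\<bar> * (exp (- a / 4) + exp (- b / 4))"
proof -
  obtain z where z: "a < z" "z < b" "lg b - lg a = (b - a) * (exp (- z) / (1 + exp (- z))\<^sup>2)"
    using MVT2[OF assms, of lg "\<lambda>t. exp (- t) / (1 + exp (- t))\<^sup>2"] lg_deriv by blast
  have "0 \<le> (b - a) * (exp (- z) / (1 + exp (- z))\<^sup>2)" using assms by simp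
  then have "\<bar>lg a - lg b\<bar> = (b - a) * (exp (- z) / (1 + exp (- z))\<^sup>2)"
    using z(3) by (simp add: abs_minus_commute)
  also have "\<dots> \<le> (b - a) * exp (- z / 4)"
    using assms by (intro mult_left_mono lg_deriv_bound) auto
  also have "\<dots> \<le> (b - a) * (exp (- a / 4) + exp (- b / 4))"
    using assms z by (intro mult_left_mono) (auto intro: add_increasing2)
  finally show ?thesis using assms by simp
qed

lemma lg_lip: "\<bar>lg a - lg b\<bar> \<le> \<bar>a - b\<bar> * (exp (- a / 4) + exp (- b / 4))"
proof -
  consider "a < b" | "a = b" | "b < a" by linarith
  then show ?thesis
  proof cases
    case 1 then show ?thesis using lg_lip_lt[OF 1] by simp
  next
    case 2 then show ?thesis by simp
  next
    case 3 then show ?thesis using lg_lip_lt[OF 3] by (simp add: abs_minus_commute add.commute)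
  qed
qed

lemma lg_alt: "lg t = exp t / (1 + exp t)"
proof -
  have p: "exp t > 0" by simp
  have "1 / (1 + 1 / exp t) = exp t / (1 + exp t)"
    using p by (simp add: field_simps)
  then show ?thesis unfolding lg_def by (simp add: exp_minus inverse_eq_divide)
qed

lemma lg_neg: "lg (- t) = 1 - lg t"
proof -
  have p: "exp t > 0" by simp
  have "lg (- t) = 1 / (1 + exp t)" unfolding lg_def by simp
  also have "\<dots> = 1 - exp t / (1 + exp t)"
  proof -
    have nz: "1 + exp t \<noteq> 0" using p by linarith
    have "1 / (1 + exp t) + exp t / (1 + exp t) = 1"
      unfolding add_divide_distrib[symmetric] using nz by simp
    then show ?thesis by linarith
  qed
  finally show ?thesis by (simp add: lg_alt)
qed

lemma lg_lip': "\<bar>lg a - lg b\<bar> \<le> \<bar>a - b\<bar> * (exp (a / 4) + exp (b / 4))"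
  using lg_lip[of "- a" "- b"] by (simp add: lg_neg abs_minus_commute)

lemma vnorm_sq: "(vnorm d x)\<^sup>2 = (\<Sum>i<d. (x i)\<^sup>2)"
  unfolding vnorm_def by (simp add: sum_nonneg)

lemma wgt_lg:
  assumes s: "\<sigma> > 0"
  shows "wgt d \<sigma> \<theta> y = lg (2 * (\<Sum>i<d. \<theta> i * y i) / \<sigma>\<^sup>2)"
proof -
  define A where "A = (\<Sum>i<d. (\<theta> i - y i)\<^sup>2)"
  define B where "B = (\<Sum>i<d. (\<theta> i + y i)\<^sup>2)"
  define P where "P = (\<Sum>i<d. \<theta> i * y i)"
  have BA: "B = A + 4 * P" unfolding A_def B_def P_def
    by (simp add: sum.distrib[symmetric] sum_distrib_left power2_eq_square algebra_simps)
  have k: "2 * \<sigma>\<^sup>2 > 0" using s by simp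
  have "wgt d \<sigma> \<theta> y = exp (- A / (2 * \<sigma>\<^sup>2)) / (exp (- A / (2 * \<sigma>\<^sup>2)) + exp (- B / (2 * \<sigma>\<^sup>2)))"
    unfolding wgt_def A_def B_def vnorm_sq ..
  also have "exp (- B / (2 * \<sigma>\<^sup>2)) = exp (- A / (2 * \<sigma>\<^sup>2)) * exp (- (2 * P / \<sigma>\<^sup>2))"
    unfolding BA exp_add[symmetric] using s by (simp add: field_simps)
  also have "exp (- A / (2 * \<sigma>\<^sup>2)) / (exp (- A / (2 * \<sigma>\<^sup>2)) + exp (- A / (2 * \<sigma>\<^sup>2)) * exp (- (2 * P / \<sigma>\<^sup>2)))
     = lg (2 * P / \<sigma>\<^sup>2)"
  proof -
    have gen: "x / (x + x * y) = 1 / (1 + y)" if "x > 0" for x y :: real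
    proof -
      have "x + x * y = x * (1 + y)" by (simp add: algebra_simps)
      then show ?thesis using that by simp
    qed
    show ?thesis unfolding lg_def by (rule gen) simp
  qed
  finally show ?thesis by (simp add: P_def)
qed

lemma meas_lin: "(\<lambda>v. \<Sum>i<d. a i * (m i + v i)) \<in> borel_measurable (gauss d \<sigma>)"
  unfolding gauss_def
  by (intro borel_measurable_sum borel_measurable_times borel_measurable_add borel_measurable_const measurable_component_singleton) auto

lemma meas_comp: "i < d \<Longrightarrow> (\<lambda>v. m + v i) \<in> borel_measurable (gauss d \<sigma>)"
  unfolding gauss_def
  by (intro borel_measurable_add borel_measurable_const measurable_component_singleton) auto

lemma lg_meas[measurable]: "lg \<in> borel_measurable borel"
  unfolding lg_def by measurable

lemma wgt_meas:
  assumes "\<sigma> > 0"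
  shows "(\<lambda>v. wgt d \<sigma> \<theta> (\<lambda>i. m i + v i)) \<in> borel_measurable (gauss d \<sigma>)"
proof -
  have "(\<lambda>v. lg (2 * (\<Sum>i<d. \<theta> i * (m i + v i)) / \<sigma>\<^sup>2)) \<in> borel_measurable (gauss d \<sigma>)"
    using measurable_comp[OF meas_lin[where a=\<theta> and m=m and d=d and \<sigma>=\<sigma>], of "\<lambda>t. lg (2 * t / \<sigma>\<^sup>2)"]
    by (simp add: comp_def)
  then show ?thesis using wgt_lg[OF assms] by simp
qed

definition ip :: "nat \<Rightarrow> (nat \<Rightarrow> real) \<Rightarrow> (nat \<Rightarrow> real) \<Rightarrow> real" where
  "ip d u x = (\<Sum>i<d. u i * x i)"

lemma ip_self_nonneg: "0 \<le> ip d u u"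
  unfolding ip_def by (intro sum_nonneg) auto

lemma ip_CS: "(ip d u w)\<^sup>2 \<le> ip d u u * ip d w w"
  unfolding ip_def using Cauchy_Schwarz_ineq_sum[of u w "{..<d}"] by (simp add: power2_eq_square)

lemma vnorm_ip: "(vnorm d u)\<^sup>2 = ip d u u"
  unfolding vnorm_sq ip_def by (simp add: power2_eq_square)

lemma T_int:
  assumes s: "\<sigma> > 0" and ss: "s * s = 1"
  shows "has_bochner_integral (gauss d \<sigma>)
     (\<lambda>v. exp (- s * ip d \<phi> (\<lambda>i. s * \<theta>s i + v i) / (2 * \<sigma>\<^sup>2)) * (ip d u (\<lambda>i. s * \<theta>s i + v i))\<^sup>2)
     (exp (- ip d \<phi> \<theta>s / (2 * \<sigma>\<^sup>2) + ip d \<phi> \<phi> / (8 * \<sigma>\<^sup>2)) * ((ip d u (\<lambda>i. \<theta>s i - \<phi> i / 2))\<^sup>2 + \<sigma>\<^sup>2 * ip d u u))"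
proof -
  define c where "c k = - s * \<phi> k / (2 * \<sigma>\<^sup>2)" for k
  define m where "m i = s * \<theta>s i" for i
  have q: "has_bochner_integral (gauss d \<sigma>) (\<lambda>v. exp (- ip d \<phi> \<theta>s / (2 * \<sigma>\<^sup>2)) * ((\<Sum>i<d. u i * (m i + v i))\<^sup>2 * exp (\<Sum>k<d. c k * v k)))
     (exp (- ip d \<phi> \<theta>s / (2 * \<sigma>\<^sup>2)) * (exp (\<sigma>\<^sup>2 * (\<Sum>k<d. (c k)\<^sup>2) / 2) * ((\<Sum>i<d. u i * (m i + \<sigma>\<^sup>2 * c i))\<^sup>2 + \<sigma>\<^sup>2 * (\<Sum>i<d. (u i)\<^sup>2))))"
    by (intro has_bochner_integral_mult_right gaussd_quad[OF s])
  have ex: "- s * ip d \<phi> (\<lambda>i. s * \<theta>s i + v i) / (2 * \<sigma>\<^sup>2) = - ip d \<phi> \<theta>s / (2 * \<sigma>\<^sup>2) + (\<Sum>k<d. c k * v k)" for v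
  proof -
    have "- s * ip d \<phi> (\<lambda>i. s * \<theta>s i + v i) = - (s * s) * ip d \<phi> \<theta>s + (\<Sum>k<d. (- s * \<phi> k) * v k)"
      unfolding ip_def by (simp add: algebra_simps sum.distrib sum_distrib_left)
    then show ?thesis using s ss unfolding c_def by (simp add: sum_negf sum_divide_distrib[symmetric] field_simps)
  qed
  have fe: "(\<lambda>v. exp (- s * ip d \<phi> (\<lambda>i. s * \<theta>s i + v i) / (2 * \<sigma>\<^sup>2)) * (ip d u (\<lambda>i. s * \<theta>s i + v i))\<^sup>2) =
     (\<lambda>v. exp (- ip d \<phi> \<theta>s / (2 * \<sigma>\<^sup>2)) * ((\<Sum>i<d. u i * (m i + v i))\<^sup>2 * exp (\<Sum>k<d. c k * v k)))"
    by (rule ext, simp only: ex exp_add) (simp add: ip_def m_def)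
  have e1: "\<sigma>\<^sup>2 * (\<Sum>k<d. (c k)\<^sup>2) / 2 = ip d \<phi> \<phi> / (8 * \<sigma>\<^sup>2)"
  proof -
    have "(c k)\<^sup>2 = (s * s) * (\<phi> k * \<phi> k) / (4 * \<sigma>\<^sup>2 * \<sigma>\<^sup>2)" for k
      unfolding c_def by (simp add: power2_eq_square mult_ac)
    then have "\<sigma>\<^sup>2 * (\<Sum>k<d. (c k)\<^sup>2) / 2 = \<sigma>\<^sup>2 * (\<Sum>k<d. \<phi> k * \<phi> k) / (4 * \<sigma>\<^sup>2 * \<sigma>\<^sup>2) / 2"
      using ss by (simp add: sum_divide_distrib[symmetric])
    also have "\<dots> = ip d \<phi> \<phi> / (8 * \<sigma>\<^sup>2)" using s unfolding ip_def by (simp add: field_simps power2_eq_square)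
    finally show ?thesis .
  qed
  have e2: "(\<Sum>i<d. u i * (m i + \<sigma>\<^sup>2 * c i))\<^sup>2 = (ip d u (\<lambda>i. \<theta>s i - \<phi> i / 2))\<^sup>2"
  proof -
    have "(\<Sum>i<d. u i * (m i + \<sigma>\<^sup>2 * c i)) = s * ip d u (\<lambda>i. \<theta>s i - \<phi> i / 2)"
      unfolding ip_def m_def c_def using s by (simp add: sum_distrib_left algebra_simps)
    then show ?thesis using ss by (simp add: power2_eq_square algebra_simps)
  qed
  have e3: "(\<Sum>i<d. (u i)\<^sup>2) = ip d u u" unfolding ip_def by (simp add: power2_eq_square)
  have vv: "exp (- ip d \<phi> \<theta>s / (2 * \<sigma>\<^sup>2) + ip d \<phi> \<phi> / (8 * \<sigma>\<^sup>2)) * Y =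
     exp (- ip d \<phi> \<theta>s / (2 * \<sigma>\<^sup>2)) * (exp (ip d \<phi> \<phi> / (8 * \<sigma>\<^sup>2)) * Y)" for Y
    by (simp only: exp_add mult.assoc)
  show ?thesis using q unfolding fe e1 e2 e3 vv .
qed

lemma T_bound:
  assumes s: "\<sigma> > 0" and h1: "ip d \<phi> \<theta>s \<ge> 3/4 * ip d \<theta>s \<theta>s" and h2: "ip d \<phi> \<phi> \<le> 25/16 * ip d \<theta>s \<theta>s"
  shows "exp (- ip d \<phi> \<theta>s / (2 * \<sigma>\<^sup>2) + ip d \<phi> \<phi> / (8 * \<sigma>\<^sup>2)) * ((ip d u (\<lambda>i. \<theta>s i - \<phi> i / 2))\<^sup>2 + \<sigma>\<^sup>2 * ip d u u)
    \<le> exp (- ip d \<theta>s \<theta>s / (8 * \<sigma>\<^sup>2)) * (ip d u u * (ip d \<theta>s \<theta>s + \<sigma>\<^sup>2))"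
proof -
  define R where "R = ip d \<theta>s \<theta>s"
  define w where "w i = \<theta>s i - \<phi> i / 2" for i
  have R0: "R \<ge> 0" unfolding R_def by (rule ip_self_nonneg)
  have ww: "ip d w w = R - ip d \<phi> \<theta>s + ip d \<phi> \<phi> / 4"
    unfolding ip_def w_def R_def
    by (simp add: algebra_simps sum.distrib sum_subtractf sum_divide_distrib[symmetric] sum_distrib_left)
  have wR: "ip d w w \<le> R" using ww h1 h2 R0 unfolding R_def[symmetric] by linarith
  have uu: "ip d u u \<ge> 0" by (rule ip_self_nonneg)
  have cs: "(ip d u w)\<^sup>2 \<le> ip d u u * R"
    using ip_CS[of d u w] mult_left_mono[OF wR uu] by linarith
  have ex: "- ip d \<phi> \<theta>s / (2 * \<sigma>\<^sup>2) + ip d \<phi> \<phi> / (8 * \<sigma>\<^sup>2) \<le> - R / (8 * \<sigma>\<^sup>2)"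
  proof -
    have "- 4 * ip d \<phi> \<theta>s + ip d \<phi> \<phi> \<le> - R" using h1 h2 R0 unfolding R_def[symmetric] by linarith
    then have "(- 4 * ip d \<phi> \<theta>s + ip d \<phi> \<phi>) / (8 * \<sigma>\<^sup>2) \<le> - R / (8 * \<sigma>\<^sup>2)"
      using s by (intro divide_right_mono) auto
    then show ?thesis using s by (simp add: field_simps)
  qed
  have "exp (- ip d \<phi> \<theta>s / (2 * \<sigma>\<^sup>2) + ip d \<phi> \<phi> / (8 * \<sigma>\<^sup>2)) * ((ip d u w)\<^sup>2 + \<sigma>\<^sup>2 * ip d u u)
     \<le> exp (- R / (8 * \<sigma>\<^sup>2)) * (ip d u u * (R + \<sigma>\<^sup>2))"
    using ex cs uu by (intro mult_mono) (auto simp: algebra_simps)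
  then show ?thesis unfolding w_def R_def .
qed

lemma lg_bounds: "0 < lg t" "lg t < 1"
  unfolding lg_def by (auto simp: add_pos_pos)

lemma lg_lip_s:
  assumes "s * s = (1::real)"
  shows "\<bar>lg a - lg b\<bar> \<le> \<bar>a - b\<bar> * (exp (- s * a / 4) + exp (- s * b / 4))"
proof -
  have "(s - 1) * (s + 1) = 0" using assms by (simp add: algebra_simps)
  then have "s = 1 \<or> s = -1" by auto
  then show ?thesis using lg_lip[of a b] lg_lip'[of a b] by auto
qed

lemma amgm:
  fixes p q k :: real
  assumes "k > 0"
  shows "\<bar>p\<bar> * \<bar>q\<bar> \<le> (k * p\<^sup>2 + q\<^sup>2 / k) / 2"
proof -
  have "0 \<le> (k * \<bar>p\<bar> - \<bar>q\<bar>)\<^sup>2 / k" using assms by simp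
  also have "(k * \<bar>p\<bar> - \<bar>q\<bar>)\<^sup>2 / k = k * p\<^sup>2 + q\<^sup>2 / k - 2 * (\<bar>p\<bar> * \<bar>q\<bar>)"
    using assms by (simp add: power2_eq_square field_simps)
  finally show ?thesis by simp
qed

lemma prob_gauss: "\<sigma> > 0 \<Longrightarrow> prob_space (gauss d \<sigma>)"
  unfolding gauss_def by (rule prob_space_PiM) (rule prob_space_normal_density)

lemma int_gy:
  assumes s: "\<sigma> > 0" and i: "i < d"
  shows "integrable (gauss d \<sigma>) (\<lambda>v. 2 * (wgt d \<sigma> \<theta> (\<lambda>i. m i + v i) - wgt d \<sigma> \<theta>' (\<lambda>i. m i + v i)) * (m i + v i))"
proof -
  interpret G: prob_space "gauss d \<sigma>" by (rule prob_gauss[OF s])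
  have c: "integrable (gauss d \<sigma>) (\<lambda>v. (m i + v i) * (m i + v i) * exp (\<Sum>k<d. (\<lambda>_. 0) k * v k))"
    using gaussd_core[OF s i i, of m "\<lambda>_. 0"] by (simp add: has_bochner_integral_iff)
  have f: "integrable (gauss d \<sigma>) (\<lambda>v. 1 + (m i + v i) * (m i + v i) * exp (\<Sum>k<d. (\<lambda>_. 0) k * v k))"
    by (intro Bochner_Integration.integrable_add G.integrable_const c)
  show ?thesis
  proof (rule Bochner_Integration.integrable_bound[OF f])
    show "(\<lambda>v. 2 * (wgt d \<sigma> \<theta> (\<lambda>i. m i + v i) - wgt d \<sigma> \<theta>' (\<lambda>i. m i + v i)) * (m i + v i)) \<in> borel_measurable (gauss d \<sigma>)"
      by (intro borel_measurable_times borel_measurable_diff borel_measurable_const wgt_meas[OF s] meas_comp[OF i])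
    show "AE x in gauss d \<sigma>. norm (2 * (wgt d \<sigma> \<theta> (\<lambda>i. m i + x i) - wgt d \<sigma> \<theta>' (\<lambda>i. m i + x i)) * (m i + x i))
        \<le> norm (1 + (m i + x i) * (m i + x i) * exp (\<Sum>k<d. (\<lambda>_. 0) k * x k))"
    proof (rule AE_I2)
      fix x
      define y where "y = m i + x i"
      have w: "\<bar>wgt d \<sigma> \<theta> (\<lambda>i. m i + x i) - wgt d \<sigma> \<theta>' (\<lambda>i. m i + x i)\<bar> \<le> 1"
        unfolding wgt_lg[OF s] using lg_bounds by (smt (verit))
      have "\<bar>2 * (wgt d \<sigma> \<theta> (\<lambda>i. m i + x i) - wgt d \<sigma> \<theta>' (\<lambda>i. m i + x i)) * y\<bar> \<le> 2 * \<bar>y\<bar>"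
      proof -
        define W where "W = wgt d \<sigma> \<theta> (\<lambda>i. m i + x i) - wgt d \<sigma> \<theta>' (\<lambda>i. m i + x i)"
        have "\<bar>W\<bar> * \<bar>y\<bar> \<le> 1 * \<bar>y\<bar>" using w unfolding W_def by (intro mult_right_mono) auto
        then have "\<bar>2 * W * y\<bar> \<le> 2 * \<bar>y\<bar>" by (simp add: abs_mult)
        then show ?thesis unfolding W_def .
      qed
      also have "\<dots> \<le> 1 + y * y"
        using sum_squares_ge_zero[of "\<bar>y\<bar> - 1" 0] by (simp add: power2_eq_square algebra_simps abs_mult_self_eq)
      finally show "norm (2 * (wgt d \<sigma> \<theta> (\<lambda>i. m i + x i) - wgt d \<sigma> \<theta>' (\<lambda>i. m i + x i)) * (m i + x i))
        \<le> norm (1 + (m i + x i) * (m i + x i) * exp (\<Sum>k<d. (\<lambda>_. 0) k * x k))"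
        unfolding y_def by simp
    qed
  qed
qed

lemma ip_diff: "ip d \<theta> y - ip d \<theta>s y = ip d (\<lambda>i. \<theta> i - \<theta>s i) y"
  unfolding ip_def by (simp add: sum_subtractf left_diff_distrib)

lemma pw_bound:
  assumes s: "\<sigma> > 0" and ss: "s * s = 1" and k: "k > 0"
  shows "2 * (wgt d \<sigma> \<theta> y - wgt d \<sigma> \<theta>s y) * ip d z y \<le>
    2 / \<sigma>\<^sup>2 * ((exp (- s * ip d \<theta> y / (2 * \<sigma>\<^sup>2)) + exp (- s * ip d \<theta>s y / (2 * \<sigma>\<^sup>2)))
        * (k * (ip d (\<lambda>i. \<theta> i - \<theta>s i) y)\<^sup>2 + (ip d z y)\<^sup>2 / k))"
proof -
  define a where "a = 2 * ip d \<theta> y / \<sigma>\<^sup>2"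
  define b where "b = 2 * ip d \<theta>s y / \<sigma>\<^sup>2"
  define E where "E = exp (- s * ip d \<theta> y / (2 * \<sigma>\<^sup>2)) + exp (- s * ip d \<theta>s y / (2 * \<sigma>\<^sup>2))"
  define P where "P = ip d (\<lambda>i. \<theta> i - \<theta>s i) y"
  define Q where "Q = ip d z y"
  have E0: "E \<ge> 0" unfolding E_def by (intro add_nonneg_nonneg) auto
  have wa: "wgt d \<sigma> \<theta> y = lg a" unfolding wgt_lg[OF s] a_def ip_def ..
  have wb: "wgt d \<sigma> \<theta>s y = lg b" unfolding wgt_lg[OF s] b_def ip_def ..
  have ea: "- s * a / 4 = - s * ip d \<theta> y / (2 * \<sigma>\<^sup>2)" unfolding a_def using s by (simp add: field_simps)
  have eb: "- s * b / 4 = - s * ip d \<theta>s y / (2 * \<sigma>\<^sup>2)" unfolding b_def using s by (simp add: field_simps)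
  have ab: "a - b = 2 * P / \<sigma>\<^sup>2" unfolding a_def b_def P_def ip_diff[symmetric] by (simp add: diff_divide_distrib)
  have lip: "\<bar>lg a - lg b\<bar> \<le> \<bar>a - b\<bar> * E" using lg_lip_s[OF ss, of a b] unfolding E_def ea eb .
  have "(lg a - lg b) * Q \<le> \<bar>lg a - lg b\<bar> * \<bar>Q\<bar>"
    by (metis abs_ge_self abs_mult)
  then have "2 * (lg a - lg b) * Q \<le> 2 * \<bar>lg a - lg b\<bar> * \<bar>Q\<bar>" by (simp only: mult.assoc)
  also have "\<dots> \<le> 2 * (\<bar>a - b\<bar> * E) * \<bar>Q\<bar>"
    using lip by (intro mult_right_mono mult_left_mono) auto
  also have "\<dots> = 4 / \<sigma>\<^sup>2 * E * (\<bar>P\<bar> * \<bar>Q\<bar>)"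
    unfolding ab using s by (simp add: abs_mult abs_divide field_simps)
  also have "\<dots> \<le> 4 / \<sigma>\<^sup>2 * E * ((k * P\<^sup>2 + Q\<^sup>2 / k) / 2)"
    using amgm[OF k, of P Q] E0 s by (intro mult_left_mono) auto
  also have "\<dots> = 2 / \<sigma>\<^sup>2 * (E * (k * P\<^sup>2 + Q\<^sup>2 / k))" by simp
  finally show ?thesis unfolding wa wb E_def P_def Q_def .
qed

lemma branch:
  assumes s: "\<sigma> > 0" and ss: "s * s = 1" and k: "k > 0"
    and h1: "ip d \<theta> \<theta>s \<ge> 3/4 * ip d \<theta>s \<theta>s" and h2: "ip d \<theta> \<theta> \<le> 25/16 * ip d \<theta>s \<theta>s"
  shows "(\<integral>v. 2 * (wgt d \<sigma> \<theta> (\<lambda>i. s * \<theta>s i + v i) - wgt d \<sigma> \<theta>s (\<lambda>i. s * \<theta>s i + v i)) * ip d z (\<lambda>i. s * \<theta>s i + v i) \<partial>gauss d \<sigma>)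
     \<le> 4 / \<sigma>\<^sup>2 * exp (- ip d \<theta>s \<theta>s / (8 * \<sigma>\<^sup>2)) * (ip d \<theta>s \<theta>s + \<sigma>\<^sup>2) *
        (k * ip d (\<lambda>i. \<theta> i - \<theta>s i) (\<lambda>i. \<theta> i - \<theta>s i) + ip d z z / k)"
proof -
  define \<Delta> where "\<Delta> = (\<lambda>i. \<theta> i - \<theta>s i)"
  define R where "R = ip d \<theta>s \<theta>s"
  define E where "E = exp (- R / (8 * \<sigma>\<^sup>2))"
  define W where "W \<phi> v = exp (- s * ip d \<phi> (\<lambda>i. s * \<theta>s i + v i) / (2 * \<sigma>\<^sup>2))" for \<phi> v
  define Q where "Q u v = (ip d u (\<lambda>i. s * \<theta>s i + v i))\<^sup>2" for u v
  define T where "T \<phi> u = exp (- ip d \<phi> \<theta>s / (2 * \<sigma>\<^sup>2) + ip d \<phi> \<phi> / (8 * \<sigma>\<^sup>2)) *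
      ((ip d u (\<lambda>i. \<theta>s i - \<phi> i / 2))\<^sup>2 + \<sigma>\<^sup>2 * ip d u u)" for \<phi> u
  have TI: "has_bochner_integral (gauss d \<sigma>) (\<lambda>v. W \<phi> v * Q u v) (T \<phi> u)" for \<phi> u
    unfolding W_def Q_def T_def by (rule T_int[OF s ss])
  define F where "F v = 2 / \<sigma>\<^sup>2 * ((k * (W \<theta> v * Q \<Delta> v) + W \<theta> v * Q z v / k) +
      (k * (W \<theta>s v * Q \<Delta> v) + W \<theta>s v * Q z v / k))" for v
  have hF: "has_bochner_integral (gauss d \<sigma>) F (2 / \<sigma>\<^sup>2 * ((k * T \<theta> \<Delta> + T \<theta> z / k) + (k * T \<theta>s \<Delta> + T \<theta>s z / k)))"
    unfolding F_def by (intro has_bochner_integral_mult_right has_bochner_integral_add has_bochner_integral_divide_zero TI)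
  have Fint: "integrable (gauss d \<sigma>) F" using hF by (simp add: has_bochner_integral_iff)
  have pw: "2 * (wgt d \<sigma> \<theta> (\<lambda>i. s * \<theta>s i + v i) - wgt d \<sigma> \<theta>s (\<lambda>i. s * \<theta>s i + v i)) * ip d z (\<lambda>i. s * \<theta>s i + v i) \<le> F v" for v
  proof -
    have "2 * (wgt d \<sigma> \<theta> (\<lambda>i. s * \<theta>s i + v i) - wgt d \<sigma> \<theta>s (\<lambda>i. s * \<theta>s i + v i)) * ip d z (\<lambda>i. s * \<theta>s i + v i)
       \<le> 2 / \<sigma>\<^sup>2 * ((W \<theta> v + W \<theta>s v) * (k * Q \<Delta> v + Q z v / k))"
      unfolding W_def Q_def \<Delta>_def by (rule pw_bound[OF s ss k])
    also have "\<dots> = F v" unfolding F_def by (simp add: algebra_simps)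
    finally show ?thesis .
  qed
  have F0: "0 \<le> F v" for v
    unfolding F_def W_def Q_def using k s by (auto intro!: mult_nonneg_nonneg add_nonneg_nonneg divide_nonneg_pos)
  have "(\<integral>v. 2 * (wgt d \<sigma> \<theta> (\<lambda>i. s * \<theta>s i + v i) - wgt d \<sigma> \<theta>s (\<lambda>i. s * \<theta>s i + v i)) * ip d z (\<lambda>i. s * \<theta>s i + v i) \<partial>gauss d \<sigma>)
      \<le> integral\<^sup>L (gauss d \<sigma>) F"
    by (rule integral_mono'[OF Fint]) (use pw F0 in auto)
  also have "integral\<^sup>L (gauss d \<sigma>) F = 2 / \<sigma>\<^sup>2 * ((k * T \<theta> \<Delta> + T \<theta> z / k) + (k * T \<theta>s \<Delta> + T \<theta>s z / k))"
    using hF by (simp add: has_bochner_integral_iff)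
  also have "\<dots> \<le> 2 / \<sigma>\<^sup>2 * ((k * (E * (ip d \<Delta> \<Delta> * (R + \<sigma>\<^sup>2))) + E * (ip d z z * (R + \<sigma>\<^sup>2)) / k) +
        (k * (E * (ip d \<Delta> \<Delta> * (R + \<sigma>\<^sup>2))) + E * (ip d z z * (R + \<sigma>\<^sup>2)) / k))"
  proof -
    have R0: "R \<ge> 0" unfolding R_def by (rule ip_self_nonneg)
    have TB1: "T \<theta> u \<le> E * (ip d u u * (R + \<sigma>\<^sup>2))" for u
      unfolding T_def E_def R_def by (rule T_bound[OF s h1 h2])
    have TB2: "T \<theta>s u \<le> E * (ip d u u * (R + \<sigma>\<^sup>2))" for u
      unfolding T_def E_def R_def by (rule T_bound[OF s]) (use R0 R_def in auto)
    have "k * T \<theta> \<Delta> \<le> k * (E * (ip d \<Delta> \<Delta> * (R + \<sigma>\<^sup>2)))" using k TB1 by (intro mult_left_mono) auto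
    moreover have "T \<theta> z / k \<le> E * (ip d z z * (R + \<sigma>\<^sup>2)) / k" using k TB1 by (intro divide_right_mono) auto
    moreover have "k * T \<theta>s \<Delta> \<le> k * (E * (ip d \<Delta> \<Delta> * (R + \<sigma>\<^sup>2)))" using k TB2 by (intro mult_left_mono) auto
    moreover have "T \<theta>s z / k \<le> E * (ip d z z * (R + \<sigma>\<^sup>2)) / k" using k TB2 by (intro divide_right_mono) auto
    ultimately have "(k * T \<theta> \<Delta> + T \<theta> z / k) + (k * T \<theta>s \<Delta> + T \<theta>s z / k) \<le>
        (k * (E * (ip d \<Delta> \<Delta> * (R + \<sigma>\<^sup>2))) + E * (ip d z z * (R + \<sigma>\<^sup>2)) / k) +
        (k * (E * (ip d \<Delta> \<Delta> * (R + \<sigma>\<^sup>2))) + E * (ip d z z * (R + \<sigma>\<^sup>2)) / k)" by linarith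
    then show ?thesis by (rule mult_left_mono) (use s in simp)
  qed
  also have "\<dots> = 4 / \<sigma>\<^sup>2 * E * (R + \<sigma>\<^sup>2) * (k * ip d \<Delta> \<Delta> + ip d z z / k)"
    using k s by (simp add: field_simps)
  finally show ?thesis unfolding E_def R_def \<Delta>_def .
qed

lemma solve_real:
  fixes Z \<delta> A :: real
  assumes Z0: "Z \<ge> 0" and d0: "\<delta> \<ge> 0" and A0: "A \<ge> 0" and A1: "2 * A < 1"
    and h: "\<And>k. k > 0 \<Longrightarrow> Z\<^sup>2 \<le> A * (k * \<delta>\<^sup>2 + Z\<^sup>2 / k)"
  shows "Z \<le> 2 * A * \<delta>"
proof (cases "Z = 0")
  case True then show ?thesis using A0 d0 by simp
next
  case False
  then have Zp: "Z > 0" using Z0 by simp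
  show ?thesis
  proof (cases "\<delta> = 0")
    case True
    have "Z\<^sup>2 \<le> A * Z\<^sup>2" using h[of 1] True by simp
    moreover have "Z\<^sup>2 > 0" using Zp by simp
    moreover have "A * Z\<^sup>2 < 1 * Z\<^sup>2" using A1 \<open>Z\<^sup>2 > 0\<close> by (intro mult_strict_right_mono) auto
    ultimately have False by linarith
    then show ?thesis ..
  next
    case False
    then have dp: "\<delta> > 0" using d0 by simp
    have "Z\<^sup>2 \<le> A * (Z / \<delta> * \<delta>\<^sup>2 + Z\<^sup>2 / (Z / \<delta>))" using h[of "Z / \<delta>"] Zp dp by simp
    also have "Z / \<delta> * \<delta>\<^sup>2 + Z\<^sup>2 / (Z / \<delta>) = 2 * Z * \<delta>" using Zp dp by (simp add: power2_eq_square field_simps)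
    finally have "Z * Z \<le> Z * (2 * A * \<delta>)" by (simp add: power2_eq_square mult_ac)
    then show ?thesis using Zp by simp
  qed
qed

lemma arith_aux:
  fixes x e :: real
  shows "1 + x / 12 + x * x / 288 \<le> e \<Longrightarrow> 2500 * x / 288 \<le> x * x / 288 \<Longrightarrow> 2500 \<le> x \<Longrightarrow> 8 * (x + 1) \<le> e"
proof -
  assume "1 + x / 12 + x * x / 288 \<le> e" "2500 * x / 288 \<le> x * x / 288" "2500 \<le> x"
  moreover have "8 * (x + 1) = 8 * x + 8" by simp
  ultimately show ?thesis by linarith
qed

lemma exp_real:
  fixes x :: real
  assumes "x \<ge> 2500"
  shows "8 * (x + 1) * exp (- x / 8) \<le> exp (- x / 24)"
proof -
  have t: "1 + x / 12 + (x * x) / 288 \<le> exp (x / 12)"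
    using exp_lower_Taylor_quadratic[of "x / 12"] assms by (simp add: power2_eq_square)
  have q: "x * x \<ge> 2500 * x" using assms by (intro mult_right_mono) auto
  have q2: "x * x / 288 \<ge> 2500 * x / 288" using q by (intro divide_right_mono) auto
  have "8 * (x + 1) \<le> exp (x / 12)" using arith_aux[OF t q2 assms] .
  then have "8 * (x + 1) * exp (- x / 8) \<le> exp (x / 12) * exp (- x / 8)" by (intro mult_right_mono) auto
  also have "\<dots> = exp (- x / 24)" by (simp add: exp_add[symmetric])
  finally show ?thesis .
qed

lemma main_case:
  assumes s: "\<sigma> > 0" and eta: "\<eta> \<ge> 50" and hr: "vnorm d \<theta>s / \<sigma> \<ge> \<eta>"
    and h\<theta>: "vnorm d (\<lambda>i. \<theta> i - \<theta>s i) \<le> vnorm d \<theta>s / 4"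
  shows "vnorm d (\<lambda>i. gmm_expect d \<sigma> \<theta>s (\<lambda>y. 2 * (wgt d \<sigma> \<theta> y - wgt d \<sigma> \<theta>s y) * y i))
            \<le> exp (- (1/24) * \<eta>\<^sup>2) * vnorm d (\<lambda>i. \<theta> i - \<theta>s i)"
proof -
  define \<Delta> where "\<Delta> = (\<lambda>i. \<theta> i - \<theta>s i)"
  define r where "r = vnorm d \<theta>s"
  define R where "R = ip d \<theta>s \<theta>s"
  define \<delta> where "\<delta> = vnorm d \<Delta>"
  define z where "z = (\<lambda>i. gmm_expect d \<sigma> \<theta>s (\<lambda>y. 2 * (wgt d \<sigma> \<theta> y - wgt d \<sigma> \<theta>s y) * y i))"
  define Z where "Z = vnorm d z"
  have r0: "r \<ge> 0" unfolding r_def vnorm_def by (simp add: sum_nonneg)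
  have d0: "\<delta> \<ge> 0" unfolding \<delta>_def vnorm_def by (simp add: sum_nonneg)
  have Z0: "Z \<ge> 0" unfolding Z_def vnorm_def by (simp add: sum_nonneg)
  have Rr: "R = r\<^sup>2" unfolding R_def r_def vnorm_ip ..
  have dd: "ip d \<Delta> \<Delta> = \<delta>\<^sup>2" unfolding \<delta>_def vnorm_ip ..
  have ZZ: "ip d z z = Z\<^sup>2" unfolding Z_def vnorm_ip ..
  have dr: "\<delta> \<le> r / 4" using h\<theta> unfolding \<delta>_def r_def \<Delta>_def .
  have cs: "\<bar>ip d \<Delta> \<theta>s\<bar> \<le> \<delta> * r"
  proof -
    have "(ip d \<Delta> \<theta>s)\<^sup>2 \<le> (\<delta> * r)\<^sup>2"
      using ip_CS[of d \<Delta> \<theta>s] unfolding power_mult_distrib dd Rr[symmetric] R_def .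
    then have "\<bar>ip d \<Delta> \<theta>s\<bar>\<^sup>2 \<le> (\<delta> * r)\<^sup>2" by simp
    then show ?thesis using power2_le_imp_le[of "\<bar>ip d \<Delta> \<theta>s\<bar>" "\<delta> * r"] d0 r0 by simp
  qed
  have cs2: "\<bar>ip d \<Delta> \<theta>s\<bar> \<le> R / 4"
  proof -
    have "\<delta> * r \<le> r / 4 * r" using dr r0 by (intro mult_right_mono) auto
    then show ?thesis using cs Rr by (simp add: power2_eq_square)
  qed
  have ipt: "ip d \<theta> \<theta>s = R + ip d \<Delta> \<theta>s"
    unfolding R_def ip_def \<Delta>_def by (simp add: sum.distrib[symmetric] algebra_simps)
  have iptt: "ip d \<theta> \<theta> = R + 2 * ip d \<Delta> \<theta>s + ip d \<Delta> \<Delta>"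
    unfolding R_def ip_def \<Delta>_def by (simp add: sum.distrib[symmetric] sum_distrib_left algebra_simps power2_eq_square)
  have dd2: "ip d \<Delta> \<Delta> \<le> R / 16"
  proof -
    have "\<delta> * \<delta> \<le> (r / 4) * (r / 4)" using dr d0 by (intro mult_mono) auto
    then show ?thesis unfolding dd Rr by (simp add: power2_eq_square)
  qed
  have h1: "ip d \<theta> \<theta>s \<ge> 3/4 * ip d \<theta>s \<theta>s" using ipt cs2 unfolding R_def by linarith
  have h2: "ip d \<theta> \<theta> \<le> 25/16 * ip d \<theta>s \<theta>s" using iptt cs2 dd2 unfolding R_def by linarith
  define g where "g m v = 2 * (wgt d \<sigma> \<theta> (\<lambda>i. m i + v i) - wgt d \<sigma> \<theta>s (\<lambda>i. m i + v i))" for m :: "nat \<Rightarrow> real" and v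
  have zi: "z i = 1/2 * (\<integral>v. g \<theta>s v * (\<theta>s i + v i) \<partial>gauss d \<sigma>) + 1/2 * (\<integral>v. g (\<lambda>i. - \<theta>s i) v * (- \<theta>s i + v i) \<partial>gauss d \<sigma>)" for i
    unfolding z_def gmm_expect_def g_def by simp
  have sumint: "(\<Sum>i<d. z i * (\<integral>v. g m v * (m i + v i) \<partial>gauss d \<sigma>)) = (\<integral>v. g m v * ip d z (\<lambda>i. m i + v i) \<partial>gauss d \<sigma>)" for m
  proof -
    have "(\<Sum>i<d. z i * (\<integral>v. g m v * (m i + v i) \<partial>gauss d \<sigma>)) = (\<Sum>i<d. (\<integral>v. z i * (g m v * (m i + v i)) \<partial>gauss d \<sigma>))"
      by simp
    also have "\<dots> = (\<integral>v. (\<Sum>i<d. z i * (g m v * (m i + v i))) \<partial>gauss d \<sigma>)"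
    proof -
      have ints: "integrable (gauss d \<sigma>) (\<lambda>v. z i * (g m v * (m i + v i)))" if "i \<in> {..<d}" for i
        using int_gy[OF s, of i d \<theta> m \<theta>s] that unfolding g_def by (intro integrable_mult_right) auto
      show ?thesis by (rule Bochner_Integration.integral_sum[OF ints, symmetric])
    qed
    also have "\<dots> = (\<integral>v. g m v * ip d z (\<lambda>i. m i + v i) \<partial>gauss d \<sigma>)"
      unfolding ip_def by (simp add: sum_distrib_left mult_ac)
    finally show ?thesis .
  qed
  define A where "A = 4 / \<sigma>\<^sup>2 * exp (- R / (8 * \<sigma>\<^sup>2)) * (R + \<sigma>\<^sup>2)"
  have bnd: "Z\<^sup>2 \<le> A * (k * \<delta>\<^sup>2 + Z\<^sup>2 / k)" if k: "k > 0" for k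
  proof -
    have b1: "(\<integral>v. g \<theta>s v * ip d z (\<lambda>i. \<theta>s i + v i) \<partial>gauss d \<sigma>) \<le> A * (k * \<delta>\<^sup>2 + Z\<^sup>2 / k)"
      using branch[OF s _ k h1 h2, of 1 z] unfolding A_def g_def R_def dd[unfolded \<Delta>_def] ZZ by simp
    have b2: "(\<integral>v. g (\<lambda>i. - \<theta>s i) v * ip d z (\<lambda>i. - \<theta>s i + v i) \<partial>gauss d \<sigma>) \<le> A * (k * \<delta>\<^sup>2 + Z\<^sup>2 / k)"
      using branch[OF s _ k h1 h2, of "-1" z] unfolding A_def g_def R_def dd[unfolded \<Delta>_def] ZZ by simp
    have "Z\<^sup>2 = (\<Sum>i<d. z i * z i)" unfolding ZZ[symmetric] ip_def ..
    also have "\<dots> = 1/2 * (\<Sum>i<d. z i * (\<integral>v. g \<theta>s v * (\<theta>s i + v i) \<partial>gauss d \<sigma>)) +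
        1/2 * (\<Sum>i<d. z i * (\<integral>v. g (\<lambda>i. - \<theta>s i) v * (- \<theta>s i + v i) \<partial>gauss d \<sigma>))"
      by (subst (2) zi) (simp add: sum_distrib_left sum.distrib algebra_simps)
    also have "\<dots> = 1/2 * (\<integral>v. g \<theta>s v * ip d z (\<lambda>i. \<theta>s i + v i) \<partial>gauss d \<sigma>) +
        1/2 * (\<integral>v. g (\<lambda>i. - \<theta>s i) v * ip d z (\<lambda>i. - \<theta>s i + v i) \<partial>gauss d \<sigma>)"
      using sumint[of \<theta>s] sumint[of "\<lambda>i. - \<theta>s i"] by simp
    finally show ?thesis using b1 b2 by linarith
  qed
  have x: "R / \<sigma>\<^sup>2 \<ge> \<eta>\<^sup>2"
  proof -
    have "\<eta>\<^sup>2 \<le> (r / \<sigma>)\<^sup>2" using hr eta unfolding r_def by (intro power_mono) auto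
    then show ?thesis unfolding Rr by (simp add: power_divide)
  qed
  have A2: "2 * A = 8 * (R / \<sigma>\<^sup>2 + 1) * exp (- (R / \<sigma>\<^sup>2) / 8)"
    unfolding A_def using s by (simp add: field_simps)
  have x2500: "R / \<sigma>\<^sup>2 \<ge> 2500"
  proof -
    have "(50::real)\<^sup>2 \<le> \<eta>\<^sup>2" using eta by (intro power_mono) auto
    then show ?thesis using x by simp
  qed
  have A3: "2 * A \<le> exp (- (R / \<sigma>\<^sup>2) / 24)" unfolding A2 by (rule exp_real[OF x2500])
  have A4: "exp (- (R / \<sigma>\<^sup>2) / 24) \<le> exp (- (1/24) * \<eta>\<^sup>2)" using x by simp
  have A5: "exp (- (R / \<sigma>\<^sup>2) / 24) < 1" using x2500 by simp
  have A0: "A \<ge> 0" unfolding A_def using s R_def ip_self_nonneg[of d \<theta>s] by simp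
  have "Z \<le> 2 * A * \<delta>" by (rule solve_real[OF Z0 d0 A0 _ bnd]) (use A3 A5 in linarith)
  also have "\<dots> \<le> exp (- (1/24) * \<eta>\<^sup>2) * \<delta>" using order_trans[OF A3 A4] d0 by (rule mult_right_mono)
  finally show ?thesis unfolding Z_def z_def \<delta>_def \<Delta>_def .
qed

lemma main2:
  "\<forall>(d::nat) (\<sigma>::real) (\<theta>s::nat \<Rightarrow> real) (\<eta>::real).
     \<sigma> > 0 \<and> \<eta> \<ge> 50 \<and> vnorm d \<theta>s / \<sigma> \<ge> \<eta> \<longrightarrow>
     (\<exists>\<gamma>::real. 0 < \<gamma> \<and> \<gamma> < 1 \<and> \<gamma> \<le> exp (- (1/24) * \<eta>\<^sup>2) \<and>
       (\<forall>\<theta>::nat \<Rightarrow> real. vnorm d (\<lambda>i. \<theta> i - \<theta>s i) \<le> vnorm d \<theta>s / 4 \<longrightarrow>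
          vnorm d (\<lambda>i. gmm_expect d \<sigma> \<theta>s
                       (\<lambda>y. 2 * (wgt d \<sigma> \<theta> y - wgt d \<sigma> \<theta>s y) * y i))
            \<le> \<gamma> * vnorm d (\<lambda>i. \<theta> i - \<theta>s i)))"
proof (intro allI impI)
  fix d :: nat and \<sigma> :: real and \<theta>s :: "nat \<Rightarrow> real" and \<eta> :: real
  assume H: "0 < \<sigma> \<and> 50 \<le> \<eta> \<and> \<eta> \<le> vnorm d \<theta>s / \<sigma>"
  have p: "\<eta>\<^sup>2 > 0" using H by simp
  show "\<exists>\<gamma>::real. 0 < \<gamma> \<and> \<gamma> < 1 \<and> \<gamma> \<le> exp (- (1/24) * \<eta>\<^sup>2) \<and>
       (\<forall>\<theta>::nat \<Rightarrow> real. vnorm d (\<lambda>i. \<theta> i - \<theta>s i) \<le> vnorm d \<theta>s / 4 \<longrightarrow>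
          vnorm d (\<lambda>i. gmm_expect d \<sigma> \<theta>s
                       (\<lambda>y. 2 * (wgt d \<sigma> \<theta> y - wgt d \<sigma> \<theta>s y) * y i))
            \<le> \<gamma> * vnorm d (\<lambda>i. \<theta> i - \<theta>s i))"
    apply (rule exI[of _ "exp (- (1/24) * \<eta>\<^sup>2)"])
    using main_case[of \<sigma> \<eta> d \<theta>s] H p by auto
qed

theorem lemma3:
  shows "\<exists>c2 > 0. \<exists>\<eta>0 > 0. \<forall>(d::nat) (\<sigma>::real) (\<theta>s::nat \<Rightarrow> real) (\<eta>::real).
     \<sigma> > 0 \<and> \<eta> \<ge> \<eta>0 \<and> vnorm d \<theta>s / \<sigma> \<ge> \<eta> \<longrightarrow>
     (\<exists>\<gamma>::real. 0 < \<gamma> \<and> \<gamma> < 1 \<and> \<gamma> \<le> exp (- c2 * \<eta>\<^sup>2) \<and>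
       (\<forall>\<theta>::nat \<Rightarrow> real. vnorm d (\<lambda>i. \<theta> i - \<theta>s i) \<le> vnorm d \<theta>s / 4 \<longrightarrow>
          vnorm d (\<lambda>i. gmm_expect d \<sigma> \<theta>s
                       (\<lambda>y. 2 * (wgt d \<sigma> \<theta> y - wgt d \<sigma> \<theta>s y) * y i))
            \<le> \<gamma> * vnorm d (\<lambda>i. \<theta> i - \<theta>s i)))"
  apply (rule exI[of _ "1/24"])
  apply (rule conjI)
   apply simp
  apply (rule exI[of _ "50"])
  apply (rule conjI)
   apply simp
  apply (rule main2)
  done

end
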